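(* Let $G$ be an $(r,t,a_0)$-staircase graph, let $n=|E(G)|$. (1) Let $\mathcal{C}_2(G)$ be the binary code of $G$, of dimension $k$. Then $\mathcal{C}_2(G)$ is an $(n,k,r,t)_{\mathrm{seq}}$ code if and only if $G$ has girth at least $t+1$. (2) If $G$ has girth at least $t+1$, then every code over $\mathbb{F}_q$ associated to $G$ (of dimension $k$, say) is an $(n,k,r,t)_{\mathrm{seq}}$ code.
   Context: Staircase graph: Let $r\ge 2$ and $t\ge 2$ be integers, $s=\lfloor (t-1)/2\rfloor$, and $a_0$ a positive integer; if $t$ is odd assume $t\ge 3$. An $(r,t,a_0)$-staircase graph is a finite simple graph $G$ whose vertex set is a disjoint union $\{v_\infty\}\cup V_0\cup V_1\cup\cdots\cup V_s$ such that: $|V_0|=a_0$ and $v_\infty$ is adjacent to every vertex of $V_0$ and to no other vertex; for each $i$ with $0\le i\le s-1$ (if $t$ is even) or $0\le i\le s-2$ (if $t$ is odd), every vertex of $V_i$ has exactly $r$ neighbours in $V_{i+1}$ and every vertex of $V_{i+1}$ has exactly one neighbour in $V_i$; if $t$ is even, every vertex of $V_s$ has exactly $r$ neighbours in $V_s$; if $t$ is odd, every vertex of $V_{s-1}$ has exactly $r$ neighbours in $V_s$ and every vertex of $V_s$ has exactly $r+1$ neighbours in $V_{s-1}$; and there are no other edges. Codes of a staircase graph: a code over $\mathbb{F}_q$ associated to $G$ is a linear code of length $|E(G)|$ (coordinates indexed by the edges) having a parity-check matrix $H$ with rows indexed by $V(G)\setminus\{v_\infty\}$ and columns indexed by $E(G)$,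 where $H_{v,e}\neq 0$ if and only if $e$ is incident with $v$. The binary code $\mathcal{C}_2(G)$ of $G$ is the associated code over $\mathbb{F}_2$ (i.e. $H$ is the $0/1$ vertex–edge incidence matrix with the row of $v_\infty$ deleted). Girth: length of a shortest cycle ($\infty$ if there is none). Sequential-recovery LRC: an $(n,k,r,t)_{\mathrm{seq}}$ code is an $[n,k]$ linear code $\mathcal{C}\subseteq\mathbb{F}_q^n$ such that for every $E\subseteq[n]$ with $1\le|E|=u\le t$ there is an ordering $\ell_1,\dots,\ell_u$ of $E$ and sets $R_j\subseteq[n]$, $|R_j|\le r$, $R_j\cap\{\ell_j,\dots,\ell_u\}=\emptyset$, with coefficients $a_{j,i}\in\mathbb{F}_q$ such that $c_{\ell_j}=\sum_{i\in R_j}a_{j,i}c_i$ for all $c\in\mathcal{C}$, $j\in[u]$. *)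

theory Defs
  imports Main "HOL-Library.Function_Algebras" "HOL-Library.Z2" "HOL-Library.Extended_Nat"
begin

definition simple_graph :: "'v set \<Rightarrow> 'v set set \<Rightarrow> bool" where
  "simple_graph V E \<longleftrightarrow> finite V \<and> (\<forall>e\<in>E. \<exists>x y. x \<noteq> y \<and> x \<in> V \<and> y \<in> V \<and> e = {x, y})"

definition adj :: "'v set set \<Rightarrow> 'v \<Rightarrow> 'v \<Rightarrow> bool" where
  "adj E x y \<longleftrightarrow> {x, y} \<in> E \<and> x \<noteq> y"

definition nbrs :: "'v set set \<Rightarrow> 'v \<Rightarrow> 'v set" where
  "nbrs E x = {y. adj E x y}"

definition is_cycle :: "'v set \<Rightarrow> 'v set set \<Rightarrow> 'v list \<Rightarrow> bool" where
  "is_cycle V E vs \<longleftrightarrow> length vs \<ge> 3 \<and> distinct vs \<and> set vs \<subseteq> V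
     \<and> (\<forall>i. Suc i < length vs \<longrightarrow> adj E (vs ! i) (vs ! Suc i))
     \<and> adj E (last vs) (hd vs)"

definition girth :: "'v set \<Rightarrow> 'v set set \<Rightarrow> enat" where
  "girth V E = (INF vs \<in> {vs. is_cycle V E vs}. enat (length vs))"

definition staircase_graph ::
  "nat \<Rightarrow> nat \<Rightarrow> nat \<Rightarrow> 'v set \<Rightarrow> 'v set set \<Rightarrow> 'v \<Rightarrow> (nat \<Rightarrow> 'v set) \<Rightarrow> bool" where
  "staircase_graph r t a0 V E vinf L \<longleftrightarrow>
     (let s = (t - 1) div 2 in
      simple_graph V E
      \<and> V = insert vinf (\<Union>i\<le>s. L i)
      \<and> (\<forall>i\<le>s. vinf \<notin> L i)
      \<and> (\<forall>i\<le>s. \<forall>j\<le>s. i \<noteq> j \<longrightarrow> L i \<inter> L j = {})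
      \<and> card (L 0) = a0
      \<and> nbrs E vinf = L 0
      \<and> (\<forall>i. (if even t then i < s else i + 1 < s) \<longrightarrow>
            (\<forall>v\<in>L i. card (nbrs E v \<inter> L (Suc i)) = r)
          \<and> (\<forall>v\<in>L (Suc i). card (nbrs E v \<inter> L i) = 1))
      \<and> (even t \<longrightarrow> (\<forall>v\<in>L s. card (nbrs E v \<inter> L s) = r))
      \<and> (odd t \<longrightarrow> (\<forall>v\<in>L (s - 1). card (nbrs E v \<inter> L s) = r)
                  \<and> (\<forall>v\<in>L s. card (nbrs E v \<inter> L (s - 1)) = r + 1))
      \<and> (\<forall>e\<in>E.
            (\<exists>x\<in>L 0. e = {vinf, x})
          \<or> (\<exists>i. (if even t then i < s else i + 1 < s) \<and> (\<exists>x\<in>L i. \<exists>y\<in>L (Suc i). e = {x, y}))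
          \<or> (even t \<and> (\<exists>x\<in>L s. \<exists>y\<in>L s. e = {x, y}))
          \<or> (odd t \<and> (\<exists>x\<in>L (s - 1). \<exists>y\<in>L s. e = {x, y}))))"

definition is_staircase :: "nat \<Rightarrow> nat \<Rightarrow> nat \<Rightarrow> 'v set \<Rightarrow> 'v set set \<Rightarrow> 'v \<Rightarrow> bool" where
  "is_staircase r t a0 V E vinf \<longleftrightarrow> r \<ge> 2 \<and> t \<ge> 2 \<and> a0 > 0 \<and> (odd t \<longrightarrow> t \<ge> 3)
     \<and> (\<exists>L. staircase_graph r t a0 V E vinf L)"

text \<open>Words are functions from edges to the field, vanishing outside E.
  The code with parity-check matrix H (rows indexed by V - {vinf}, columns by E).\<close>
definition code_of_pcm ::
  "'v set \<Rightarrow> 'v set set \<Rightarrow> 'v \<Rightarrow> ('v \<Rightarrow> 'v set \<Rightarrow> 'f::field) \<Rightarrow> ('v set \<Rightarrow> 'f) set" where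
  "code_of_pcm V E vinf H =
     {c. (\<forall>e. e \<notin> E \<longrightarrow> c e = 0) \<and> (\<forall>v \<in> V - {vinf}. (\<Sum>e\<in>E. H v e * c e) = 0)}"

definition associated_pcm :: "'v set \<Rightarrow> 'v set set \<Rightarrow> 'v \<Rightarrow> ('v \<Rightarrow> 'v set \<Rightarrow> 'f::field) \<Rightarrow> bool" where
  "associated_pcm V E vinf H \<longleftrightarrow> (\<forall>v \<in> V - {vinf}. \<forall>e\<in>E. H v e \<noteq> 0 \<longleftrightarrow> v \<in> e)"

text \<open>The binary code: H is the 0/1 incidence matrix over F_2 (type bit).\<close>
definition binary_code :: "'v set \<Rightarrow> 'v set set \<Rightarrow> 'v \<Rightarrow> ('v set \<Rightarrow> bit) set" where
  "binary_code V E vinf = code_of_pcm V E vinf (\<lambda>v e. if v \<in> e then 1 else 0)"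

abbreviation fscale :: "'f::field \<Rightarrow> ('i \<Rightarrow> 'f) \<Rightarrow> ('i \<Rightarrow> 'f)" where
  "fscale a c \<equiv> (\<lambda>x. a * c x)"

definition code_dim :: "('i \<Rightarrow> 'f::field) set \<Rightarrow> nat" where
  "code_dim C = vector_space.dim fscale C"

text \<open>The ordering l_1..l_u is the list ls; index j (0-based) corresponds to l_{j+1},
  and {l_j,...,l_u} is set (drop j ls).\<close>
definition seq_LRC :: "'i set \<Rightarrow> nat \<Rightarrow> nat \<Rightarrow> nat \<Rightarrow> nat \<Rightarrow> ('i \<Rightarrow> 'f::field) set \<Rightarrow> bool" where
  "seq_LRC I n k r t C \<longleftrightarrow>
     finite I \<and> card I = n \<and> module.subspace fscale C \<and> (\<forall>c\<in>C. \<forall>i. i \<notin> I \<longrightarrow> c i = 0)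
     \<and> code_dim C = k
     \<and> (\<forall>F. F \<subseteq> I \<and> 1 \<le> card F \<and> card F \<le> t \<longrightarrow>
          (\<exists>ls. distinct ls \<and> set ls = F \<and>
             (\<forall>j < length ls. \<exists>R a. R \<subseteq> I \<and> card R \<le> r \<and> R \<inter> set (drop j ls) = {}
                 \<and> (\<forall>c\<in>C. c (ls ! j) = (\<Sum>i\<in>R. a i * c i)))))"

end

theory Submission
  imports Defs
begin

lemma sg_edge: "simple_graph V E \<Longrightarrow> e \<in> E \<Longrightarrow> \<exists>x y. x \<noteq> y \<and> x \<in> V \<and> y \<in> V \<and> e = {x, y}"
  unfolding simple_graph_def by blast
lemma sg_finV: "simple_graph V E \<Longrightarrow> finite V"
  unfolding simple_graph_def by blast

lemma nbrs_sub: "simple_graph V E \<Longrightarrow> nbrs E v \<subseteq> V"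
proof
  fix y assume sg: "simple_graph V E" and "y \<in> nbrs E v"
  then have "{v,y} \<in> E" by (simp add: nbrs_def adj_def)
  then obtain a b where "a \<in> V" "b \<in> V" "{v,y} = {a,b}" using sg_edge[OF sg] by blast
  then show "y \<in> V" by (auto simp: doubleton_eq_iff)
qed

lemma nbrs_finite: "simple_graph V E \<Longrightarrow> finite (nbrs E v)"
  by (rule finite_subset[OF nbrs_sub sg_finV])
lemma sg_finite: "simple_graph V E \<Longrightarrow> finite E"
proof -
  assume sg: "simple_graph V E"
  have "E \<subseteq> Pow V" using sg_edge[OF sg] by blast
  moreover have "finite V" using sg simple_graph_def by blast
  moreover have "finite (Pow V)" using \<open>finite V\<close> by simp
  ultimately show ?thesis using finite_subset by blast
qed

lemma edges_at_card: "simple_graph V E \<Longrightarrow> card {e\<in>E. v\<in>e} \<le> card (nbrs E v)"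
proof -
  assume sg: "simple_graph V E"
  have "{e\<in>E. v\<in>e} \<subseteq> (\<lambda>y. {v,y}) ` nbrs E v"
  proof
    fix e assume "e \<in> {e\<in>E. v\<in>e}"
    then have e: "e \<in> E" "v \<in> e" by auto
    then obtain x y where xy: "x \<noteq> y" "e = {x,y}" using sg_edge[OF sg] by blast
    show "e \<in> (\<lambda>y. {v,y}) ` nbrs E v"
    proof (cases "v = x")
      case True
      then show ?thesis using e xy by (auto simp: nbrs_def adj_def)
    next
      case False
      then have "v = y" "e = {v,x}" using e xy by auto
      then show ?thesis using e xy by (auto simp: nbrs_def adj_def)
    qed
  qed
  moreover have "finite ((\<lambda>y. {v,y}) ` nbrs E v)" using nbrs_finite[OF sg] by blast
  ultimately have "card {e\<in>E. v\<in>e} \<le> card ((\<lambda>y. {v,y}) ` nbrs E v)" by (rule card_mono[rotated])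
  also have "\<dots> \<le> card (nbrs E v)" by (rule card_image_le) (rule nbrs_finite[OF sg])
  finally show ?thesis .
qed

lemma card2: "finite N \<Longrightarrow> N \<subseteq> A \<union> B \<Longrightarrow> card (N \<inter> A) \<le> 1 \<Longrightarrow> card (N \<inter> B) \<le> r \<Longrightarrow> card N \<le> r + 1"
proof -
  assume a: "finite N" "N \<subseteq> A \<union> B" "card (N \<inter> A) \<le> 1" "card (N \<inter> B) \<le> r"
  have "N = (N \<inter> A) \<union> (N \<inter> B)" using a by blast
  then have "card N \<le> card (N \<inter> A) + card (N \<inter> B)" by (metis card_Un_le)
  then show ?thesis using a by linarith
qed


lemma stair_deg:
  assumes G: "is_staircase r t a0 V E vinf" and v: "v \<in> V" "v \<noteq> vinf"
  shows "card (nbrs E v) \<le> r + 1"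
proof -
  from G obtain L where SG: "staircase_graph r t a0 V E vinf L" and t: "odd t \<longrightarrow> t \<ge> 3"
    unfolding is_staircase_def by blast
  define s where "s = (t - 1) div 2"
  note D = SG[unfolded staircase_graph_def Let_def s_def[symmetric]]
  have sg: "simple_graph V E" using D by (elim conjE) assumption
  have VL: "V = insert vinf (\<Union>i\<le>s. L i)" using D by (elim conjE) assumption
  have vinfL: "\<forall>i\<le>s. vinf \<notin> L i" using D by (elim conjE) assumption
  have disj: "\<forall>i\<le>s. \<forall>j\<le>s. i \<noteq> j \<longrightarrow> L i \<inter> L j = {}" using D by (elim conjE) assumption
  have nb0: "nbrs E vinf = L 0" using D by (elim conjE) assumption
  have lev: "\<forall>i. (if even t then i < s else i + 1 < s) \<longrightarrow>
            (\<forall>v\<in>L i. card (nbrs E v \<inter> L (Suc i)) = r)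
          \<and> (\<forall>v\<in>L (Suc i). card (nbrs E v \<inter> L i) = 1)" using D by (elim conjE) assumption
  have ev: "even t \<longrightarrow> (\<forall>v\<in>L s. card (nbrs E v \<inter> L s) = r)" using D by (elim conjE) assumption
  have od: "odd t \<longrightarrow> (\<forall>v\<in>L (s - 1). card (nbrs E v \<inter> L s) = r)
                  \<and> (\<forall>v\<in>L s. card (nbrs E v \<inter> L (s - 1)) = r + 1)" using D by (elim conjE) assumption
  have edges: "\<forall>e\<in>E.
            (\<exists>x\<in>L 0. e = {vinf, x})
          \<or> (\<exists>i. (if even t then i < s else i + 1 < s) \<and> (\<exists>x\<in>L i. \<exists>y\<in>L (Suc i). e = {x, y}))
          \<or> (even t \<and> (\<exists>x\<in>L s. \<exists>y\<in>L s. e = {x, y}))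
          \<or> (odd t \<and> (\<exists>x\<in>L (s - 1). \<exists>y\<in>L s. e = {x, y}))" using D by (elim conjE) assumption
  obtain i where i: "i \<le> s" "v \<in> L i" using VL v by blast
  have lay: "\<And>j. j \<le> s \<Longrightarrow> v \<in> L j \<Longrightarrow> j = i" using disj i by blast
  have sodd: "odd t \<Longrightarrow> 1 \<le> s" using t s_def by presburger
  define cond where "cond j = (if even t then j < s else j + 1 < s)" for j
  have cls: "(i = 0 \<and> y = vinf) \<or> (1 \<le> i \<and> cond (i - 1) \<and> y \<in> L (i - 1)) \<or> (cond i \<and> y \<in> L (Suc i))
     \<or> (even t \<and> i = s \<and> y \<in> L s) \<or> (odd t \<and> i = s - 1 \<and> y \<in> L s) \<or> (odd t \<and> i = s \<and> y \<in> L (s - 1))"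
    if y: "y \<in> nbrs E v" for y
  proof -
    have e: "{v,y} \<in> E" "v \<noteq> y" using y by (auto simp: nbrs_def adj_def)
    from bspec[OF edges e(1)] show ?thesis
    proof (elim disjE bexE exE conjE)
      fix x assume "x \<in> L 0" "{v,y} = {vinf,x}"
      then show ?thesis using v lay[of 0] by (auto simp: doubleton_eq_iff)
    next
      fix j x y' assume c: "(if even t then j < s else j + 1 < s)" "x \<in> L j" "y' \<in> L (Suc j)" "{v,y} = {x,y'}"
      have "j + 1 \<le> s" using c(1) by (auto split: if_splits)
      then show ?thesis using c lay[of j] lay[of "Suc j"] unfolding cond_def by (auto simp: doubleton_eq_iff)
    next
      fix x y' assume c: "even t" "x \<in> L s" "y' \<in> L s" "{v,y} = {x,y'}"
      then show ?thesis using lay[of s] by (auto simp: doubleton_eq_iff)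
    next
      fix x y' assume c: "odd t" "x \<in> L (s-1)" "y' \<in> L s" "{v,y} = {x,y'}"
      then show ?thesis using lay[of s] lay[of "s-1"] by (auto simp: doubleton_eq_iff)
    qed
  qed
  have fin: "finite (nbrs E v)" using nbrs_finite[OF sg] .
  define A where "A = (if i = 0 then {vinf} else L (i - 1))"
  have cA: "card (nbrs E v \<inter> A) \<le> 1" if "i = 0 \<or> cond (i - 1)"
  proof (cases "i = 0")
    case True
    then have "card (nbrs E v \<inter> A) \<le> card {vinf}" unfolding A_def by (intro card_mono) auto
    then show ?thesis by simp
  next
    case False
    then have "cond (i - 1)" using that by auto
    have si: "Suc (i - 1) = i" using False by simp
    have "\<forall>v\<in>L (Suc (i-1)). card (nbrs E v \<inter> L (i-1)) = 1"
      using lev \<open>cond (i-1)\<close> unfolding cond_def by blast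
    then have "card (nbrs E v \<inter> L (i - 1)) = 1" using i(2) si by simp
    then show ?thesis using False unfolding A_def by simp
  qed
  show ?thesis
  proof (cases "cond i")
    case True
    then have "i < s" unfolding cond_def by (auto split: if_splits)
    have "nbrs E v \<subseteq> A \<union> L (Suc i)"
 proof
 fix y assume "y \<in> nbrs E v"
 from cls[OF this] show "y \<in> A \<union> L (Suc i)" using \<open>i < s\<close> True sodd unfolding A_def cond_def by (auto split: if_splits)
 qed
    moreover have "card (nbrs E v \<inter> L (Suc i)) \<le> r" using lev True i unfolding cond_def by simp
    moreover have "i = 0 \<or> cond (i - 1)" using True unfolding cond_def by (auto split: if_splits)
    ultimately show ?thesis using card2[OF fin] cA by blast
  next
    case False
    show ?thesis
    proof (cases "even t")
      case True
      then have iS: "i = s" using False i unfolding cond_def by auto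
      have "nbrs E v \<subseteq> A \<union> L s"
 proof
 fix y assume "y \<in> nbrs E v"
 from cls[OF this] show "y \<in> A \<union> L s" using iS True False unfolding A_def cond_def by (auto split: if_splits)
 qed
      moreover have "card (nbrs E v \<inter> L s) \<le> r" using ev True i iS by simp
      moreover have "i = 0 \<or> cond (i - 1)" using True iS unfolding cond_def by auto
      ultimately show ?thesis using card2[OF fin] cA by blast
    next
      case odd: False
      then have s1: "1 \<le> s" using sodd by blast
      have "i = s - 1 \<or> i = s" using False odd i unfolding cond_def by auto
      then show ?thesis
      proof
        assume iS: "i = s - 1"
        have "nbrs E v \<subseteq> A \<union> L s"
 proof
 fix y assume "y \<in> nbrs E v"
 from cls[OF this] show "y \<in> A \<union> L s" using iS odd False s1 unfolding A_def cond_def by (auto split: if_splits)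
 qed
        moreover have "card (nbrs E v \<inter> L s) \<le> r" using od odd i iS by simp
        moreover have "i = 0 \<or> cond (i - 1)" using odd iS s1 unfolding cond_def by auto
        ultimately show ?thesis using card2[OF fin] cA by blast
      next
        assume iS: "i = s"
        have "nbrs E v \<subseteq> L (s - 1)"
 proof
 fix y assume "y \<in> nbrs E v"
 from cls[OF this] show "y \<in> L (s - 1)" using iS odd False s1 unfolding cond_def by (auto split: if_splits)
 qed
        then have "nbrs E v = nbrs E v \<inter> L (s - 1)" by blast
        then show ?thesis using od odd i iS by (metis order.refl)
      qed
    qed
  qed
qed


lemma module_fscale: "module (fscale :: 'f::field \<Rightarrow> ('i \<Rightarrow> 'f) \<Rightarrow> _)"
  by unfold_locales (auto simp: algebra_simps)

lemma subspace_code: "module.subspace fscale (code_of_pcm V E vinf (H :: _ \<Rightarrow> _ \<Rightarrow> 'f::field))"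
proof -
  have "0 \<in> code_of_pcm V E vinf H" by (simp add: code_of_pcm_def)
  moreover have "x + y \<in> code_of_pcm V E vinf H" if "x \<in> code_of_pcm V E vinf H" "y \<in> code_of_pcm V E vinf H" for x y
    using that by (simp add: code_of_pcm_def distrib_left sum.distrib)
  moreover have "fscale c x \<in> code_of_pcm V E vinf H" if "x \<in> code_of_pcm V E vinf H" for c x
  proof -
    have "(\<Sum>e\<in>E. H v e * (c * x e)) = c * (\<Sum>e\<in>E. H v e * x e)" for v
      by (simp add: sum_distrib_left algebra_simps)
    then show ?thesis using that by (simp add: code_of_pcm_def)
  qed
  ultimately show ?thesis
    by (simp add: module.subspace_def[OF module_fscale])
qed

lemma recover:
  assumes H: "associated_pcm V E vinf H" and fin: "finite E" and v: "v \<in> V" "v \<noteq> vinf"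
    and e: "e \<in> E" "v \<in> e" and c: "c \<in> code_of_pcm V E vinf (H :: _ \<Rightarrow> _ \<Rightarrow> 'f::field)"
  shows "c e = (\<Sum>i\<in>{e'\<in>E. v\<in>e'} - {e}. (- H v i / H v e) * c i)"
proof -
  define R where "R = {e'\<in>E. v\<in>e'} - {e}"
  have Hne: "H v e \<noteq> 0" using H v e unfolding associated_pcm_def by blast
  have "0 = (\<Sum>e'\<in>E. H v e' * c e')" using c v unfolding code_of_pcm_def by auto
  also have "\<dots> = (\<Sum>e'\<in>{e'\<in>E. v\<in>e'}. H v e' * c e')"
  proof (rule sum.mono_neutral_right[OF fin])
    show "{e' \<in> E. v \<in> e'} \<subseteq> E" by blast
    show "\<forall>i\<in>E - {e' \<in> E. v \<in> e'}. H v i * c i = 0" using H v unfolding associated_pcm_def by auto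
  qed
  also have "\<dots> = H v e * c e + (\<Sum>e'\<in>R. H v e' * c e')"
    unfolding R_def using e fin by (subst sum.remove[of _ e]) auto
  finally have eq: "H v e * c e = - (\<Sum>e'\<in>R. H v e' * c e')" by (simp add: eq_neg_iff_add_eq_0 add.commute)
  have "(\<Sum>i\<in>R. (- H v i / H v e) * c i) = (\<Sum>i\<in>R. (H v i * c i) * (- 1 / H v e))"
    by (rule sum.cong) (simp_all add: field_simps Hne)
  also have "\<dots> = (\<Sum>i\<in>R. H v i * c i) * (- 1 / H v e)" by (rule sum_distrib_right[symmetric])
  also have "\<dots> = c e" using eq Hne by (simp add: field_simps)
  finally show ?thesis unfolding R_def by simp
qed

definition fpath :: "'v set set \<Rightarrow> 'v list \<Rightarrow> bool" where
  "fpath F ps \<longleftrightarrow> distinct ps \<and> (\<forall>i. Suc i < length ps \<longrightarrow> {ps ! i, ps ! Suc i} \<in> F)"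

lemma fpath_rev: "fpath F ps \<Longrightarrow> fpath F (rev ps)"
  unfolding fpath_def
proof (intro conjI allI impI)
  assume a: "distinct ps \<and> (\<forall>i. Suc i < length ps \<longrightarrow> {ps ! i, ps ! Suc i} \<in> F)"
  then show "distinct (rev ps)" by simp
  fix i assume i: "Suc i < length (rev ps)"
  define n where "n = length ps"
  define j where "j = n - Suc (Suc i)"
  have j1: "Suc j < n" "rev ps ! i = ps ! Suc j" "rev ps ! Suc i = ps ! j"
    using i unfolding j_def n_def by (auto simp: rev_nth Suc_diff_Suc)
  then show "{rev ps ! i, rev ps ! Suc i} \<in> F" using a unfolding n_def by (simp add: insert_commute)
qed

lemma cycle_edges_inj:
  assumes d: "distinct cs" and m: "3 \<le> length cs"
  shows "inj_on (\<lambda>k. if Suc k < length cs then {cs!k, cs!Suc k} else {cs!(length cs - 1), cs!0}) {..<length cs}"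
proof (rule inj_onI)
  fix k k' assume k: "k \<in> {..<length cs}" "k' \<in> {..<length cs}"
    and eq: "(if Suc k < length cs then {cs!k, cs!Suc k} else {cs!(length cs - 1), cs!0}) =
             (if Suc k' < length cs then {cs!k', cs!Suc k'} else {cs!(length cs - 1), cs!0})"
  define m where "m = length cs"
  have nq: "\<And>a b. a < m \<Longrightarrow> b < m \<Longrightarrow> cs ! a = cs ! b \<longleftrightarrow> a = b"
    using d unfolding m_def by (simp add: nth_eq_iff_index_eq)
  have m3: "3 \<le> m" using m m_def by simp
  have gen: "a = b" if a: "Suc a < m" "b < m" "{cs!a, cs!Suc a} = (if Suc b < m then {cs!b, cs!Suc b} else {cs!(m-1), cs!0})" for a b
  proof (cases "Suc b < m")
    case True
    have i1: "cs!a = cs!b \<longleftrightarrow> a = b" by (rule nq) (use a True in auto)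
    have i2: "cs!a = cs!Suc b \<longleftrightarrow> a = Suc b" by (rule nq) (use a True in auto)
    have i3: "cs!Suc a = cs!b \<longleftrightarrow> Suc a = b" by (rule nq) (use a True in auto)
    from a(3) True have "{cs!a, cs!Suc a} = {cs!b, cs!Suc b}" by simp
    then have "(cs!a = cs!b \<and> cs!Suc a = cs!Suc b) \<or> (cs!a = cs!Suc b \<and> cs!Suc a = cs!b)"
      by (simp add: doubleton_eq_iff)
    then have "(a = b \<and> Suc a = Suc b) \<or> (a = Suc b \<and> Suc a = b)"
      unfolding i1 i2 i3 by (simp only: nq a True Suc_less_eq less_imp_le_nat)
    then show ?thesis by arith
  next
    case False
    have i1: "cs!a = cs!(m-1) \<longleftrightarrow> a = m-1" by (rule nq) (use a m3 in auto)
    have i2: "cs!a = cs!0 \<longleftrightarrow> a = 0" by (rule nq) (use a m3 in auto)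
    have i3: "cs!Suc a = cs!(m-1) \<longleftrightarrow> Suc a = m-1" by (rule nq) (use a m3 in auto)
    have i4: "cs!Suc a = cs!0 \<longleftrightarrow> Suc a = 0" by (rule nq) (use a m3 in auto)
    from a(3) False have "{cs!a, cs!Suc a} = {cs!(m-1), cs!0}" by simp
    then have "(cs!a = cs!(m-1) \<and> cs!Suc a = cs!0) \<or> (cs!a = cs!0 \<and> cs!Suc a = cs!(m-1))"
      by (simp add: doubleton_eq_iff)
    then have "(a = m-1 \<and> Suc a = 0) \<or> (a = 0 \<and> Suc a = m-1)"
      unfolding i1 i2 i3 i4 by (simp only: nq a)
    then have False using a m3 by arith
    then show ?thesis ..
  qed
  show "k = k'"
  proof (cases "Suc k < m")
    case True
    then show ?thesis using gen[of k k'] eq k unfolding m_def by auto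
  next
    case F: False
    show ?thesis
    proof (cases "Suc k' < m")
      case True
      then show ?thesis using gen[of k' k] eq k F unfolding m_def by auto
    next
      case False
      then show ?thesis using F k unfolding m_def by auto
    qed
  qed
qed
lemma leaf:
  assumes sg: "simple_graph V E" and FE: "F \<subseteq> E" and Fne: "F \<noteq> {}"
    and nocyc: "\<And>vs. is_cycle V E vs \<Longrightarrow> card F < length vs"
  shows "\<exists>e\<in>F. \<exists>v\<in>e. v \<noteq> vinf \<and> (\<forall>e'\<in>F. v \<in> e' \<longrightarrow> e' = e)"
proof (rule ccontr)
  assume "\<not> ?thesis"
  then have H: "\<And>e v. e \<in> F \<Longrightarrow> v \<in> e \<Longrightarrow> v \<noteq> vinf \<Longrightarrow> \<exists>e'\<in>F. v \<in> e' \<and> e' \<noteq> e" by blast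
  have finF: "finite F" using sg_finite[OF sg] FE finite_subset by blast
  have finV: "finite V" using sg_finV[OF sg] .
  define P where "P ps \<longleftrightarrow> fpath F ps \<and> set ps \<subseteq> V \<and> 2 \<le> length ps" for ps
  obtain e0 where e0: "e0 \<in> F" using Fne by blast
  then obtain x y where xy: "x \<noteq> y" "x \<in> V" "y \<in> V" "e0 = {x,y}" using sg_edge[OF sg] FE by blast
  have "P [x,y]" unfolding P_def fpath_def using xy e0 by (auto simp: less_Suc_eq)
  moreover have "\<forall>ps. P ps \<longrightarrow> length ps < card V + 1"
  proof (intro allI impI)
    fix ps assume "P ps"
    then have "distinct ps" "set ps \<subseteq> V" unfolding P_def fpath_def by auto
    then have "length ps \<le> card V" by (metis distinct_card card_mono finV)
    then show "length ps < card V + 1" by simp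
  qed
  ultimately obtain ps0 where ps0: "P ps0" and mx: "\<And>qs. P qs \<Longrightarrow> length qs \<le> length ps0"
    using ex_has_greatest_nat[of P "[x,y]" length "card V + 1"] by blast
  obtain qs where qs: "P qs" "length qs = length ps0" "last qs \<noteq> vinf"
  proof (cases "last ps0 = vinf")
    case False
    then show ?thesis using that ps0 by blast
  next
    case True
    have d: "distinct ps0" "2 \<le> length ps0" using ps0 unfolding P_def fpath_def by auto
    have ne: "ps0 \<noteq> []" using d by auto
    have "hd ps0 \<noteq> last ps0"
    proof -
      have "hd ps0 = ps0 ! 0" "last ps0 = ps0 ! (length ps0 - 1)" using ne by (simp_all add: hd_conv_nth last_conv_nth[of ps0] nth_Cons' not_less_eq_eq)
      moreover have "ps0 ! 0 \<noteq> ps0 ! (length ps0 - 1)"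
      proof
        assume "ps0 ! 0 = ps0 ! (length ps0 - 1)"
        then have "0 = length ps0 - 1" using d ne nth_eq_iff_index_eq[of ps0 0 "length ps0 - 1"] by simp
        then show False using d by simp
      qed
      ultimately show ?thesis by simp
    qed
    moreover have "P (rev ps0)" using ps0 fpath_rev unfolding P_def by auto
    moreover have "last (rev ps0) = hd ps0" using d by (simp add: last_rev)
    ultimately show ?thesis using that True by (metis length_rev)
  qed
  define n where "n = length qs"
  have n2: "2 \<le> n" and dq: "distinct qs" and sq: "set qs \<subseteq> V"
    and pq: "\<And>i. Suc i < n \<Longrightarrow> {qs ! i, qs ! Suc i} \<in> F"
    using qs(1) unfolding P_def fpath_def n_def by auto
  define u where "u = qs ! (n - 1)"
  define p where "p = qs ! (n - 2)"
  have qne: "qs \<noteq> []" using n2 n_def by auto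
  have ul: "u = last qs" using qne unfolding u_def n_def by (simp add: last_conv_nth)
  have e1: "{p, u} \<in> F" using pq[of "n-2"] n2 unfolding p_def u_def by (simp add: Suc_diff_Suc numeral_2_eq_2)
  obtain e' where e': "e' \<in> F" "u \<in> e'" "e' \<noteq> {p,u}" using H[OF e1, of u] qs(3) ul by blast
  obtain w where w: "e' = {u, w}" "w \<noteq> u" "w \<in> V"
    using sg_edge[OF sg, of e'] e' FE by (auto simp: insert_commute)
  have wp: "w \<noteq> p" using w e' by (auto simp: insert_commute)
  show False
  proof (cases "w \<in> set qs")
    case False
    have "P (qs @ [w])"
      unfolding P_def fpath_def
    proof (intro conjI allI impI)
      show "distinct (qs @ [w])" using dq False by simp
      show "set (qs @ [w]) \<subseteq> V" using sq w by simp
      show "2 \<le> length (qs @ [w])" using n2 n_def by simp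
      fix i assume i: "Suc i < length (qs @ [w])"
      show "{(qs @ [w]) ! i, (qs @ [w]) ! Suc i} \<in> F"
      proof (cases "Suc i < n")
        case True
        then show ?thesis using pq[OF True] unfolding n_def by (simp add: nth_append)
      next
        case False
        then have "i = n - 1" using i n_def by simp
        then have "(qs @ [w]) ! i = u" "(qs @ [w]) ! Suc i = w"
          using n2 unfolding u_def n_def by (auto simp: nth_append)
        then show ?thesis using e' w by simp
      qed
    qed
    then have "length (qs @ [w]) \<le> length ps0" by (rule mx)
    then show False using qs(2) by simp
  next
    case True
    then obtain j where j: "j < n" "qs ! j = w" unfolding n_def by (metis in_set_conv_nth)
    have jn: "j < n - 2"
    proof -
      have "j \<noteq> n - 1" using j w unfolding u_def by auto
      moreover have "j \<noteq> n - 2" using j wp unfolding p_def by auto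
      ultimately show ?thesis using j by linarith
    qed
    define cs where "cs = drop j qs"
    define m where "m = length cs"
    have m: "m = n - j" "3 \<le> m" using jn unfolding m_def cs_def n_def by auto
    have csn: "\<And>k. k < m \<Longrightarrow> cs ! k = qs ! (j + k)" unfolding cs_def m_def using j n_def by simp
    have dc: "distinct cs" unfolding cs_def using dq by simp
    have hdc: "cs ! 0 = w" using csn[of 0] m j by simp
    have lc: "cs ! (m - 1) = u" using csn[of "m-1"] m j unfolding u_def by simp
    have cyc: "is_cycle V E cs"
      unfolding is_cycle_def
    proof (intro conjI allI impI)
      show "3 \<le> length cs" using m m_def by simp
      show "distinct cs" by (rule dc)
      show "set cs \<subseteq> V" using sq unfolding cs_def by (meson order_trans set_drop_subset)
      fix k assume k: "Suc k < length cs"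
      have "{cs ! k, cs ! Suc k} \<in> F" using pq[of "j + k"] csn[of k] csn[of "Suc k"] k m unfolding m_def by simp
      moreover have "cs ! k \<noteq> cs ! Suc k" using dc k by (simp add: nth_eq_iff_index_eq)
      ultimately show "adj E (cs ! k) (cs ! Suc k)" using FE unfolding adj_def by blast
    next
      have cne: "cs \<noteq> []" using m m_def by auto
      have "last cs = u" "hd cs = w" using lc hdc cne unfolding m_def by (simp_all add: last_conv_nth hd_conv_nth)
      then show "adj E (last cs) (hd cs)" using e' w FE unfolding adj_def by auto
    qed
    define g where "g k = (if Suc k < length cs then {cs!k, cs!Suc k} else {cs!(length cs - 1), cs!0})" for k
    have inj: "inj_on g {..<m}" using cycle_edges_inj[OF dc] m unfolding g_def m_def by simp
    have gF: "g ` {..<m} \<subseteq> F"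
    proof
      fix f assume "f \<in> g ` {..<m}"
      then obtain k where k: "k < m" "f = g k" by blast
      show "f \<in> F"
      proof (cases "Suc k < m")
        case True
        then show ?thesis using pq[of "j + k"] csn[of k] csn[of "Suc k"] k m unfolding g_def m_def by simp
      next
        case False
        then have "f = {u, w}" using k lc hdc unfolding g_def m_def by simp
        then show ?thesis using e' w by simp
      qed
    qed
    have "m \<le> card F" using card_inj_on_le[OF inj gF finF] by simp
    moreover have "card F < m" using nocyc[OF cyc] m_def by simp
    ultimately show False by simp
  qed
qed
lemma seq_order:
  assumes sg: "simple_graph V E" and deg: "\<And>v. v \<in> V \<Longrightarrow> v \<noteq> vinf \<Longrightarrow> card (nbrs E v) \<le> r + 1"
    and H: "associated_pcm V E vinf (H :: _ \<Rightarrow> _ \<Rightarrow> 'f::field)"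
    and nocyc: "\<And>vs. is_cycle V E vs \<Longrightarrow> t < length vs"
  shows "card F = n \<Longrightarrow> F \<subseteq> E \<Longrightarrow> n \<le> t \<Longrightarrow> \<exists>ls. distinct ls \<and> set ls = F \<and>
             (\<forall>j < length ls. \<exists>R a. R \<subseteq> E \<and> card R \<le> r \<and> R \<inter> set (drop j ls) = {}
                 \<and> (\<forall>c\<in>code_of_pcm V E vinf H. c (ls ! j) = (\<Sum>i\<in>R. a i * c i)))"
proof (induction n arbitrary: F)
  case 0
  have "finite F" using sg_finite[OF sg] 0 finite_subset by blast
  then have "F = {}" using 0 by simp
  then show ?case by simp
next
  case (Suc n)
  have finE: "finite E" using sg_finite[OF sg] .
  have finF: "finite F" using finE Suc.prems finite_subset by blast
  have Fne: "F \<noteq> {}" using Suc.prems by auto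
  have nc: "card F < length vs" if "is_cycle V E vs" for vs
    using nocyc[OF that] Suc.prems(1,3) by linarith
  obtain e v where ev: "e \<in> F" "v \<in> e" "v \<noteq> vinf" and priv: "\<And>e'. e' \<in> F \<Longrightarrow> v \<in> e' \<Longrightarrow> e' = e"
    using leaf[OF sg Suc.prems(2) Fne nc, of vinf] by blast
  have eE: "e \<in> E" using ev Suc.prems by blast
  have vV: "v \<in> V" using sg_edge[OF sg eE] ev by blast
  have "card (F - {e}) = n" using Suc.prems ev finF by simp
  moreover have "F - {e} \<subseteq> E" "n \<le> t" using Suc.prems by auto
  ultimately have "\<exists>ls. distinct ls \<and> set ls = F - {e} \<and>
             (\<forall>j < length ls. \<exists>R a. R \<subseteq> E \<and> card R \<le> r \<and> R \<inter> set (drop j ls) = {}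
                 \<and> (\<forall>c\<in>code_of_pcm V E vinf H. c (ls ! j) = (\<Sum>i\<in>R. a i * c i)))"
    by (rule Suc.IH)
  then obtain ls' where ls': "distinct ls'" "set ls' = F - {e}"
    "\<forall>j < length ls'. \<exists>R a. R \<subseteq> E \<and> card R \<le> r \<and> R \<inter> set (drop j ls') = {}
                 \<and> (\<forall>c\<in>code_of_pcm V E vinf H. c (ls' ! j) = (\<Sum>i\<in>R. a i * c i))"
    by (elim exE conjE) (rule that)
  define R where "R = {e'\<in>E. v\<in>e'} - {e}"
  have cR: "card R \<le> r"
  proof -
    have "card {e'\<in>E. v\<in>e'} \<le> r + 1" using edges_at_card[OF sg, of v] deg[OF vV ev(3)] by linarith
    moreover have "card R = card {e'\<in>E. v\<in>e'} - 1" unfolding R_def using eE ev finE by (simp add: card_Diff_singleton)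
    ultimately show ?thesis by linarith
  qed
  have RF: "R \<inter> F = {}" using priv unfolding R_def by blast
  have A: "distinct (e # ls')" using ls' by simp
  have B: "set (e # ls') = F" using ls' ev by auto
  have C: "\<forall>j < length (e # ls'). \<exists>R a. R \<subseteq> E \<and> card R \<le> r \<and> R \<inter> set (drop j (e # ls')) = {}
                 \<and> (\<forall>c\<in>code_of_pcm V E vinf H. c ((e # ls') ! j) = (\<Sum>i\<in>R. a i * c i))"
  proof (intro allI impI)
    fix j assume j: "j < length (e # ls')"
    show "\<exists>R a. R \<subseteq> E \<and> card R \<le> r \<and> R \<inter> set (drop j (e # ls')) = {}
                 \<and> (\<forall>c\<in>code_of_pcm V E vinf H. c ((e # ls') ! j) = (\<Sum>i\<in>R. a i * c i))"
    proof (cases j)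
      case 0
      have "R \<subseteq> E" unfolding R_def by blast
      moreover have "R \<inter> set (drop j (e # ls')) = {}" using RF ls' ev 0 by auto
      moreover have "\<forall>c\<in>code_of_pcm V E vinf H. c ((e # ls') ! j) = (\<Sum>i\<in>R. (- H v i / H v e) * c i)"
        using recover[OF H finE vV ev(3) eE ev(2)] 0 unfolding R_def by simp
      ultimately show ?thesis using cR
        by (intro exI[of _ R] exI[of _ "\<lambda>i. - H v i / H v e"] conjI)
    next
      case (Suc j')
      then have "j' < length ls'" using j by simp
      then have X: "\<exists>R a. R \<subseteq> E \<and> card R \<le> r \<and> R \<inter> set (drop j' ls') = {}
                 \<and> (\<forall>c\<in>code_of_pcm V E vinf H. c (ls' ! j') = (\<Sum>i\<in>R. a i * c i))"
        by (rule ls'(3)[rule_format])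
      have "(e # ls') ! j = ls' ! j'" "drop j (e # ls') = drop j' ls'" using Suc by simp_all
      then show ?thesis using X by simp
    qed
  qed
  show ?case using A B C by (intro exI[of _ "e # ls'"] conjI)
qed

lemma idx_arith:
  assumes "p < m" "3 \<le> m" "k < m"
  shows "(if Suc k < m then p = k \<or> p = Suc k else p = m - 1 \<or> p = 0) \<longleftrightarrow> (k = p \<or> k = (if p = 0 then m - 1 else p - 1))"
  using assms by (cases "p = 0"; cases "Suc k < m") auto

lemma cycle_code:
  assumes sg: "simple_graph V E" and cyc: "is_cycle V E cs"
  defines "g \<equiv> (\<lambda>k. if Suc k < length cs then {cs!k, cs!Suc k} else {cs!(length cs - 1), cs!0})"
  shows "g ` {..<length cs} \<subseteq> E" "card (g ` {..<length cs}) = length cs"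
    "(\<lambda>e. if e \<in> g ` {..<length cs} then 1 else 0 :: bit) \<in> binary_code V E vinf"
proof -
  define m where "m = length cs"
  have m3: "3 \<le> m" and dc: "distinct cs" and scV: "set cs \<subseteq> V"
    and ad: "\<And>i. Suc i < m \<Longrightarrow> adj E (cs ! i) (cs ! Suc i)" and adl: "adj E (last cs) (hd cs)"
    using cyc unfolding is_cycle_def m_def by auto
  have cne: "cs \<noteq> []" using m3 m_def by auto
  have inj: "inj_on g {..<m}" using cycle_edges_inj[OF dc] m3 unfolding g_def m_def by simp
  define F where "F = g ` {..<m}"
  show FE: "g ` {..<length cs} \<subseteq> E"
  proof
    fix f assume "f \<in> g ` {..<length cs}"
    then obtain k where k: "k < m" "f = g k" unfolding m_def by blast
    show "f \<in> E"
    proof (cases "Suc k < m")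
      case True
      then show ?thesis using ad[OF True] k unfolding g_def m_def adj_def by simp
    next
      case False
      have "last cs = cs ! (m - 1)" "hd cs = cs ! 0" using cne unfolding m_def by (simp_all add: last_conv_nth hd_conv_nth)
      then show ?thesis using adl k False unfolding g_def m_def adj_def by simp
    qed
  qed
  show "card (g ` {..<length cs}) = length cs" using card_image[OF inj] unfolding m_def by simp
  have nq: "\<And>a b. a < m \<Longrightarrow> b < m \<Longrightarrow> cs ! a = cs ! b \<longleftrightarrow> a = b"
    using dc unfolding m_def by (simp add: nth_eq_iff_index_eq)
  have par: "(\<Sum>e\<in>E. (if v \<in> e then 1 else 0) * (if e \<in> F then 1 else 0)) = (0::bit)" for v
  proof -
    have "(\<Sum>e\<in>E. (if v \<in> e then 1 else 0) * (if e \<in> F then 1 else 0)) = (\<Sum>e\<in>E. if e \<in> {e\<in>F. v \<in> e} then 1 else (0::bit))"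
      by (rule sum.cong) auto
    also have "\<dots> = of_nat (card {e\<in>F. v \<in> e})"
      using FE sg_finite[OF sg] unfolding F_def m_def
      by (subst sum.If_cases) (auto simp: Int_absorb1 subset_iff)
    also have "card {e\<in>F. v \<in> e} = card {k. k < m \<and> v \<in> g k}"
    proof -
      have "{e\<in>F. v \<in> e} = g ` {k. k < m \<and> v \<in> g k}" unfolding F_def by auto
      moreover have "inj_on g {k. k < m \<and> v \<in> g k}" using inj by (rule inj_on_subset) auto
      ultimately show ?thesis by (simp add: card_image)
    qed
    also have "(of_nat (card {k. k < m \<and> v \<in> g k}) :: bit) = 0"
    proof (cases "v \<in> set cs")
      case False
      have "\<And>k. k < m \<Longrightarrow> g k \<subseteq> set cs" using m3 unfolding g_def m_def by (auto intro!: nth_mem)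
      then have "{k. k < m \<and> v \<in> g k} = {}" using False by blast
      then show ?thesis by (simp only: card.empty of_nat_0)
    next
      case True
      then obtain p where p: "p < m" "v = cs ! p" unfolding m_def by (metis in_set_conv_nth)
      define pp where "pp = (if p = 0 then m - 1 else p - 1)"
      have memb: "v \<in> g k \<longleftrightarrow> (if Suc k < m then p = k \<or> p = Suc k else p = m - 1 \<or> p = 0)" if k: "k < m" for k
      proof (cases "Suc k < m")
        case True
        have "v \<in> g k \<longleftrightarrow> cs ! p = cs ! k \<or> cs ! p = cs ! Suc k" using True p unfolding g_def m_def by auto
        also have "\<dots> \<longleftrightarrow> p = k \<or> p = Suc k" using nq[OF p(1) k] nq[OF p(1) True] by simp
        finally show ?thesis using True by simp
      next
        case False
        have "v \<in> g k \<longleftrightarrow> cs ! p = cs ! (m - 1) \<or> cs ! p = cs ! 0" using False p unfolding g_def m_def by auto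
        also have "\<dots> \<longleftrightarrow> p = m - 1 \<or> p = 0" using nq[OF p(1), of "m - 1"] nq[OF p(1), of 0] m3 by simp
        finally show ?thesis using False by simp
      qed
      have "{k. k < m \<and> v \<in> g k} = {p, pp}"
      proof (intro set_eqI iffI)
        fix k assume "k \<in> {k. k < m \<and> v \<in> g k}"
        then have k: "k < m" "v \<in> g k" by auto
        then have "k = p \<or> k = pp" using memb[OF k(1)] idx_arith[OF p(1) m3 k(1)] unfolding pp_def by blast
        then show "k \<in> {p, pp}" by blast
      next
        fix k assume k: "k \<in> {p, pp}"
        then have "k < m" using p m3 unfolding pp_def by auto
        moreover have "k = p \<or> k = pp" using k by blast
        ultimately have "v \<in> g k" using memb[OF \<open>k < m\<close>] idx_arith[OF p(1) m3 \<open>k < m\<close>] unfolding pp_def by blast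
        then show "k \<in> {k. k < m \<and> v \<in> g k}" using \<open>k < m\<close> by blast
      qed
      moreover have "p \<noteq> pp" using m3 p unfolding pp_def by auto
      ultimately show ?thesis by simp
    qed
    finally show ?thesis .
  qed
  show "(\<lambda>e. if e \<in> g ` {..<length cs} then 1 else 0 :: bit) \<in> binary_code V E vinf"
    unfolding binary_code_def code_of_pcm_def
  proof (intro CollectI conjI allI impI ballI)
    fix e assume "e \<notin> E"
    then show "(if e \<in> g ` {..<length cs} then 1 else 0 :: bit) = 0" using FE by auto
  next
    fix v assume "v \<in> V - {vinf}"
    show "(\<Sum>e\<in>E. (if v \<in> e then 1 else 0) * (if e \<in> g ` {..<length cs} then 1 else 0 :: bit)) = 0"
      using par[of v] unfolding F_def m_def .
  qed
qed
lemma stair_sg: "is_staircase r t a0 V E vinf \<Longrightarrow> simple_graph V E"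
proof -
  assume "is_staircase r t a0 V E vinf"
  then obtain L where "staircase_graph r t a0 V E vinf L" unfolding is_staircase_def by blast
  then show "simple_graph V E" unfolding staircase_graph_def Let_def by (rule conjunct1)
qed

lemma girth_nocyc: "enat (t + 1) \<le> girth V E \<Longrightarrow> is_cycle V E vs \<Longrightarrow> t < length vs"
proof -
  assume g: "enat (t + 1) \<le> girth V E" and c: "is_cycle V E vs"
  have "girth V E \<le> enat (length vs)" unfolding girth_def by (rule INF_lower) (use c in simp)
  then have "enat (t + 1) \<le> enat (length vs)" using g by (rule order_trans[rotated])
  then show ?thesis by simp
qed

lemma girth_cyc: "\<not> enat (t + 1) \<le> girth V E \<Longrightarrow> \<exists>vs. is_cycle V E vs \<and> length vs \<le> t"
proof -
  assume "\<not> enat (t + 1) \<le> girth V E"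
  then have "(INF vs \<in> {vs. is_cycle V E vs}. enat (length vs)) < enat (t + 1)"
    unfolding girth_def by (simp add: not_le)
  then obtain vs where "is_cycle V E vs" "enat (length vs) < enat (t + 1)"
    by (auto simp: INF_less_iff)
  then show ?thesis by auto
qed

lemma general_LRC:
  assumes G: "is_staircase r t a0 V E vinf" and g: "enat (t + 1) \<le> girth V E"
    and H: "associated_pcm V E vinf (H :: _ \<Rightarrow> _ \<Rightarrow> 'f::field)"
  shows "seq_LRC E (card E) (code_dim (code_of_pcm V E vinf H)) r t (code_of_pcm V E vinf H)"
proof -
  have sg: "simple_graph V E" using stair_sg[OF G] .
  have deg: "\<And>v. v \<in> V \<Longrightarrow> v \<noteq> vinf \<Longrightarrow> card (nbrs E v) \<le> r + 1" by (rule stair_deg[OF G])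
  have nc: "\<And>vs. is_cycle V E vs \<Longrightarrow> t < length vs" by (rule girth_nocyc[OF g])
  have main: "\<forall>F. F \<subseteq> E \<and> 1 \<le> card F \<and> card F \<le> t \<longrightarrow>
          (\<exists>ls. distinct ls \<and> set ls = F \<and>
             (\<forall>j < length ls. \<exists>R a. R \<subseteq> E \<and> card R \<le> r \<and> R \<inter> set (drop j ls) = {}
                 \<and> (\<forall>c\<in>code_of_pcm V E vinf H. c (ls ! j) = (\<Sum>i\<in>R. a i * c i))))"
  proof (intro allI impI)
    fix F assume F: "F \<subseteq> E \<and> 1 \<le> card F \<and> card F \<le> t"
    show "\<exists>ls. distinct ls \<and> set ls = F \<and>
             (\<forall>j < length ls. \<exists>R a. R \<subseteq> E \<and> card R \<le> r \<and> R \<inter> set (drop j ls) = {}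
                 \<and> (\<forall>c\<in>code_of_pcm V E vinf H. c (ls ! j) = (\<Sum>i\<in>R. a i * c i)))"
      by (rule seq_order[OF sg deg H nc refl]) (use F in auto)
  qed
  have supp: "\<forall>c\<in>code_of_pcm V E vinf H. \<forall>i. i \<notin> E \<longrightarrow> c i = 0" unfolding code_of_pcm_def by blast
  show ?thesis unfolding seq_LRC_def
    by (intro conjI sg_finite[OF sg] refl subspace_code supp main)
qed

theorem mainTheorem5:
  fixes V :: "'v set" and E :: "'v set set" and vinf :: 'v
    and r t a0 :: nat
  assumes G: "is_staircase r t a0 V E vinf"
  shows "(seq_LRC E (card E) (code_dim (binary_code V E vinf)) r t (binary_code V E vinf)
            \<longleftrightarrow> girth V E \<ge> enat (t + 1))
       \<and> (girth V E \<ge> enat (t + 1) \<longrightarrow>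
            (\<forall>H :: 'v \<Rightarrow> 'v set \<Rightarrow> 'f::{field,finite}. associated_pcm V E vinf H \<longrightarrow>
               seq_LRC E (card E) (code_dim (code_of_pcm V E vinf H)) r t (code_of_pcm V E vinf H)))"
proof (intro conjI iffI impI allI)
  fix H :: "'v \<Rightarrow> 'v set \<Rightarrow> 'f::{field,finite}"
  assume "enat (t + 1) \<le> girth V E" "associated_pcm V E vinf H"
  then show "seq_LRC E (card E) (code_dim (code_of_pcm V E vinf H)) r t (code_of_pcm V E vinf H)"
    using general_LRC[OF G] by blast
next
  assume g: "enat (t + 1) \<le> girth V E"
  have bH: "associated_pcm V E vinf (\<lambda>v e. if v \<in> e then 1 else 0 :: bit)"
    unfolding associated_pcm_def by simp
  show "seq_LRC E (card E) (code_dim (binary_code V E vinf)) r t (binary_code V E vinf)"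
    unfolding binary_code_def by (rule general_LRC[OF G g bH])
next
  assume S: "seq_LRC E (card E) (code_dim (binary_code V E vinf)) r t (binary_code V E vinf)"
  show "enat (t + 1) \<le> girth V E"
  proof (rule ccontr)
    assume "\<not> enat (t + 1) \<le> girth V E"
    then obtain cs where cyc: "is_cycle V E cs" and ct: "length cs \<le> t" using girth_cyc by blast
    have sg: "simple_graph V E" using stair_sg[OF G] .
    define g where "g \<equiv> (\<lambda>k. if Suc k < length cs then {cs!k, cs!Suc k} else {cs!(length cs - 1), cs!0})"
    define F where "F = g ` {..<length cs}"
    have FE: "F \<subseteq> E" and cF: "card F = length cs"
      and cw: "(\<lambda>e. if e \<in> F then 1 else 0 :: bit) \<in> binary_code V E vinf"
      using cycle_code[OF sg cyc] unfolding F_def g_def by auto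
    have m3: "3 \<le> length cs" using cyc unfolding is_cycle_def by simp
    have XX: "\<forall>F. F \<subseteq> E \<and> 1 \<le> card F \<and> card F \<le> t \<longrightarrow>
          (\<exists>ls. distinct ls \<and> set ls = F \<and>
             (\<forall>j < length ls. \<exists>R a. R \<subseteq> E \<and> card R \<le> r \<and> R \<inter> set (drop j ls) = {}
                 \<and> (\<forall>c\<in>binary_code V E vinf. c (ls ! j) = (\<Sum>i\<in>R. a i * c i))))"
      using S unfolding seq_LRC_def by (elim conjE) assumption
    moreover have FF: "F \<subseteq> E \<and> 1 \<le> card F \<and> card F \<le> t" using FE cF m3 ct by simp
    from XX have "F \<subseteq> E \<and> 1 \<le> card F \<and> card F \<le> t \<longrightarrow> (\<exists>ls. distinct ls \<and> set ls = F \<and>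
             (\<forall>j < length ls. \<exists>R a. R \<subseteq> E \<and> card R \<le> r \<and> R \<inter> set (drop j ls) = {}
                 \<and> (\<forall>c\<in>binary_code V E vinf. c (ls ! j) = (\<Sum>i\<in>R. a i * c i))))" by (rule spec)
    from this FF have "\<exists>ls. distinct ls \<and> set ls = F \<and>
             (\<forall>j < length ls. \<exists>R a. R \<subseteq> E \<and> card R \<le> r \<and> R \<inter> set (drop j ls) = {}
                 \<and> (\<forall>c\<in>binary_code V E vinf. c (ls ! j) = (\<Sum>i\<in>R. a i * c i)))"
      by (rule mp)
    then obtain ls where ls: "distinct ls" "set ls = F"
      "\<forall>j < length ls. \<exists>R a. R \<subseteq> E \<and> card R \<le> r \<and> R \<inter> set (drop j ls) = {}
                 \<and> (\<forall>c\<in>binary_code V E vinf. c (ls ! j) = (\<Sum>i\<in>R. a i * c i))"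
      by (elim exE conjE) (rule that)
    have "length ls = card F" using distinct_card[OF ls(1)] ls(2) by simp
    then have l0: "0 < length ls" using cF m3 by linarith
    have "\<exists>R a. R \<subseteq> E \<and> card R \<le> r \<and> R \<inter> set (drop 0 ls) = {}
                 \<and> (\<forall>c\<in>binary_code V E vinf. c (ls ! 0) = (\<Sum>i\<in>R. a i * c i))"
      by (rule ls(3)[rule_format, OF l0])
    then obtain R a where Ra: "R \<subseteq> E" "card R \<le> r" "R \<inter> set (drop 0 ls) = {}"
      "\<forall>c\<in>binary_code V E vinf. c (ls ! 0) = (\<Sum>i\<in>R. a i * c i)"
      by (elim exE conjE) (rule that)
    have "ls ! 0 \<in> F" using l0 ls(2) nth_mem by blast
    moreover have "(\<lambda>e. if e \<in> F then 1 else 0 :: bit) (ls ! 0) = (\<Sum>i\<in>R. a i * (\<lambda>e. if e \<in> F then 1 else 0 :: bit) i)"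
      by (rule Ra(4)[rule_format, OF cw])
    ultimately have "(1::bit) = (\<Sum>i\<in>R. a i * (if i \<in> F then 1 else 0))"
      by simp
    also have "\<dots> = 0" using Ra(3) ls(2) by (intro sum.neutral) auto
    finally show False by simp
  qed
qed

end
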